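(* Let $f_{\theta}:\mathbb{R}^d\to\mathbb{R}$ be differentiable, let $\mathbf{x}_1,\ldots,\mathbf{x}_n\in\mathbb{R}^d$ be data points with coordinates $\mathbf{x}_i=(x_{1i},\ldots,x_{di})$, and fix $j\in\{1,\ldots,d\}$ with $\sum_{i=1}^n x_{ji}^2>0$. Suppose $f_\theta$ is weakly invariant to the $j$-th feature with constant $C>0$, i.e. $\left|\frac{\partial f_\theta(\mathbf{x})}{\partial x_j}\right|<C$ for all $\mathbf{x}\in\mathbb{R}^d$. Consider the MIND objective with gating transformation and inner-product similarity regularization, $$L(\mathbf{g})=\frac{1}{n}\sum_{i=1}^n\Big[\,\big|f_\theta(\mathbf{x}_i)-f_\theta(\mathbf{g}\odot\mathbf{x}_i)\big|+\lambda\,(\mathbf{g}\odot\mathbf{x}_i)^{\top}\mathbf{x}_i\Big],\qquad \mathbf{g}\in[0,1]^d .$$ If $\lambda\geq C\,\frac{\sum_{i=1}^n|x_{ji}|}{\sum_{i=1}^n x_{ji}^2}$, then every global minimizer $\mathbf{g}^*$ of $L$ over $[0,1]^d$ satisfies $g^*_j=0$.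
   Context: $\odot$ denotes the element-wise (Hadamard) product. The vector $\mathbf{g}\in[0,1]^d$ parametrizes the gating transformation $\mathbf{x}\mapsto\mathbf{g}\odot\mathbf{x}$; its entries $g_j$ are called MIND scores. $f_\theta$ is a fixed (pre-trained) prediction function and $\lambda>0$ is the regularization coefficient. *)

theory Defs
  imports "HOL-Analysis.Analysis"
begin

definition hadamard :: "real^'d \<Rightarrow> real^'d \<Rightarrow> real^'d" (infixl "\<odot>" 70) where
  "g \<odot> x = (\<chi> k. g $ k * x $ k)"

definition partial_deriv :: "(real^'d \<Rightarrow> real) \<Rightarrow> 'd \<Rightarrow> real^'d \<Rightarrow> real" where
  "partial_deriv f j x = deriv (\<lambda>t. f (x + t *\<^sub>R axis j 1)) 0"

definition unit_cube :: "(real^'d) set" where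
  "unit_cube = {g. \<forall>k. 0 \<le> g $ k \<and> g $ k \<le> 1}"

definition MIND_loss :: "(real^'d \<Rightarrow> real) \<Rightarrow> real \<Rightarrow> nat \<Rightarrow> (nat \<Rightarrow> real^'d) \<Rightarrow> real^'d \<Rightarrow> real" where
  "MIND_loss f lam n x g =
     (1 / real n) * (\<Sum>i=1..n. \<bar>f (x i) - f (g \<odot> x i)\<bar> + lam * ((g \<odot> x i) \<bullet> x i))"

end

theory Submission
  imports Defs
begin

lemma line_bound:
  fixes f :: "real^'d \<Rightarrow> real"
  assumes diff: "\<And>y. f differentiable (at y)"
    and weak_inv: "\<And>y. \<bar>partial_deriv f j y\<bar> < C"
    and t: "t \<noteq> 0"
  shows "\<bar>f (y + t *\<^sub>R axis j 1) - f y\<bar> < C * \<bar>t\<bar>"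
proof -
  define v :: "real^'d" where "v = axis j 1"
  define \<phi> where "\<phi> = (\<lambda>s::real. f (y + s *\<^sub>R v))"
  have dphi: "DERIV \<phi> s :> deriv \<phi> s" for s
  proof -
    have "(\<lambda>s::real. y + s *\<^sub>R v) differentiable (at s)" by (intro derivative_intros)
    then have "(f \<circ> (\<lambda>s::real. y + s *\<^sub>R v)) differentiable (at s)"
      using differentiable_chain_at diff by blast
    then show ?thesis unfolding \<phi>_def DERIV_deriv_iff_real_differentiable by (simp add: o_def)
  qed
  have pd: "deriv \<phi> s = partial_deriv f j (y + s *\<^sub>R v)" for s
  proof -
    have "DERIV (\<lambda>t. \<phi> (t + s)) 0 :> deriv \<phi> s"
      using dphi[of s] DERIV_shift[of \<phi> "deriv \<phi> s" 0 s] by simp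
    moreover have "(\<lambda>t. \<phi> (t + s)) = (\<lambda>t. f (y + s *\<^sub>R v + t *\<^sub>R v))"
      by (simp add: \<phi>_def scaleR_add_left algebra_simps)
    ultimately show ?thesis unfolding partial_deriv_def v_def
      using DERIV_imp_deriv by metis
  qed
  have bnd: "\<bar>deriv \<phi> s\<bar> < C" for s using pd weak_inv by simp
  show ?thesis
  proof (cases "t > 0")
    case True
    obtain z where "\<phi> t - \<phi> 0 = (t - 0) * deriv \<phi> z"
      using MVT2[OF True, of \<phi> "deriv \<phi>"] dphi by blast
    then have "\<bar>\<phi> t - \<phi> 0\<bar> = \<bar>t\<bar> * \<bar>deriv \<phi> z\<bar>" by (simp add: abs_mult)
    also have "\<dots> < \<bar>t\<bar> * C" using bnd[of z] True by simp
    finally show ?thesis by (simp add: \<phi>_def v_def mult.commute)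
  next
    case False
    then have tn: "t < 0" using t by simp
    obtain z where "\<phi> 0 - \<phi> t = (0 - t) * deriv \<phi> z"
      using MVT2[OF tn, of \<phi> "deriv \<phi>"] dphi by blast
    then have "\<bar>\<phi> t - \<phi> 0\<bar> = \<bar>t\<bar> * \<bar>deriv \<phi> z\<bar>" by (simp add: abs_mult abs_minus_commute)
    also have "\<dots> < \<bar>t\<bar> * C" using bnd[of z] tn by simp
    finally show ?thesis by (simp add: \<phi>_def v_def mult.commute)
  qed
qed

lemma axis_inner: "axis j 1 \<bullet> (y::real^'d) = y $ j"
  by (metis cart_eq_inner_axis inner_commute)

theorem theorem1:
  fixes f :: "real^'d \<Rightarrow> real"
    and x :: "nat \<Rightarrow> real^'d"
    and n :: nat and j :: 'd and C lam :: real and gstar :: "real^'d"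
  assumes diff: "\<And>y. f differentiable (at y)"
    and nz: "(\<Sum>i=1..n. (x i $ j)\<^sup>2) > 0"
    and Cpos: "C > 0"
    and weak_inv: "\<And>y. \<bar>partial_deriv f j y\<bar> < C"
    and lam_pos: "lam > 0"
    and lam: "lam \<ge> C * (\<Sum>i=1..n. \<bar>x i $ j\<bar>) / (\<Sum>i=1..n. (x i $ j)\<^sup>2)"
    and gstar_in: "gstar \<in> unit_cube"
    and gstar_min: "\<forall>g \<in> unit_cube. MIND_loss f lam n x gstar \<le> MIND_loss f lam n x g"
  shows "gstar $ j = 0"
proof (rule ccontr)
  assume ne: "gstar $ j \<noteq> 0"
  define a where "a = gstar $ j"
  have apos: "a > 0" using ne gstar_in unfolding a_def unit_cube_def by (auto simp: less_le)
  define g' :: "real^'d" where "g' = (\<chi> k. if k = j then 0 else gstar $ k)"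
  have g'in: "g' \<in> unit_cube" using gstar_in unfolding unit_cube_def g'_def by auto
  have decomp: "gstar \<odot> x i = g' \<odot> x i + (a * x i $ j) *\<^sub>R axis j 1" for i
    by (simp add: vec_eq_iff hadamard_def g'_def a_def axis_def)
  have inner: "(gstar \<odot> x i) \<bullet> x i = (g' \<odot> x i) \<bullet> x i + a * (x i $ j)\<^sup>2" for i
    by (simp add: decomp inner_add_left axis_inner power2_eq_square)
  define S1 where "S1 = (\<Sum>i=1..n. \<bar>x i $ j\<bar>)"
  define S2 where "S2 = (\<Sum>i=1..n. (x i $ j)\<^sup>2)"
  have S2pos: "S2 > 0" using nz S2_def by simp
  have key: "C * S1 - lam * S2 \<le> 0"
    using lam S2pos unfolding S1_def[symmetric] S2_def[symmetric] by (simp add: field_simps)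
  define T where "T = (\<lambda>g i. \<bar>f (x i) - f (g \<odot> x i)\<bar> + lam * ((g \<odot> x i) \<bullet> x i))"
  have le: "T g' i \<le> T gstar i + C * a * \<bar>x i $ j\<bar> - lam * a * (x i $ j)\<^sup>2" for i
  proof -
    have b: "\<bar>f (gstar \<odot> x i) - f (g' \<odot> x i)\<bar> \<le> C * a * \<bar>x i $ j\<bar>"
    proof (cases "x i $ j = 0")
      case True then show ?thesis by (simp add: decomp)
    next
      case False
      then have "\<bar>f (g' \<odot> x i + (a * x i $ j) *\<^sub>R axis j 1) - f (g' \<odot> x i)\<bar> < C * \<bar>a * x i $ j\<bar>"
        using line_bound[OF diff weak_inv] apos by simp
      then show ?thesis using apos by (simp add: decomp abs_mult mult.assoc)
    qed
    have "\<bar>f (x i) - f (g' \<odot> x i)\<bar> \<le> \<bar>f (x i) - f (gstar \<odot> x i)\<bar> + \<bar>f (gstar \<odot> x i) - f (g' \<odot> x i)\<bar>"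
      by linarith
    then show ?thesis using b unfolding T_def inner by (simp add: algebra_simps)
  qed
  obtain i0 where i0: "i0 \<in> {1..n}" "x i0 $ j \<noteq> 0"
  proof -
    have "\<exists>i\<in>{1..n}. x i $ j \<noteq> 0"
    proof (rule ccontr)
      assume "\<not> ?thesis"
      then have "(\<Sum>i=1..n. (x i $ j)\<^sup>2) = 0" by simp
      then show False using nz by simp
    qed
    then show ?thesis using that by blast
  qed
  have lt: "T g' i0 < T gstar i0 + C * a * \<bar>x i0 $ j\<bar> - lam * a * (x i0 $ j)\<^sup>2"
  proof -
    have b: "\<bar>f (gstar \<odot> x i0) - f (g' \<odot> x i0)\<bar> < C * a * \<bar>x i0 $ j\<bar>"
    proof -
      have "\<bar>f (g' \<odot> x i0 + (a * x i0 $ j) *\<^sub>R axis j 1) - f (g' \<odot> x i0)\<bar> < C * \<bar>a * x i0 $ j\<bar>"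
        using line_bound[OF diff weak_inv] apos i0 by simp
      then show ?thesis using apos by (simp add: decomp abs_mult mult.assoc)
    qed
    have "\<bar>f (x i0) - f (g' \<odot> x i0)\<bar> \<le> \<bar>f (x i0) - f (gstar \<odot> x i0)\<bar> + \<bar>f (gstar \<odot> x i0) - f (g' \<odot> x i0)\<bar>"
      by linarith
    then show ?thesis using b unfolding T_def inner by (simp add: algebra_simps)
  qed
  have "(\<Sum>i=1..n. T g' i) < (\<Sum>i=1..n. T gstar i + C * a * \<bar>x i $ j\<bar> - lam * a * (x i $ j)\<^sup>2)"
    by (rule sum_strict_mono_ex1) (use le lt i0 in auto)
  also have "\<dots> = (\<Sum>i=1..n. T gstar i) + a * (C * S1 - lam * S2)"
    by (simp add: S1_def S2_def sum.distrib sum_subtractf sum_distrib_left algebra_simps)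
  also have "\<dots> \<le> (\<Sum>i=1..n. T gstar i)"
    using key apos by (simp add: mult_nonneg_nonpos)
  finally have sl: "(\<Sum>i=1..n. T g' i) < (\<Sum>i=1..n. T gstar i)" .
  have npos: "real n > 0" using i0 by auto
  have "MIND_loss f lam n x g' < MIND_loss f lam n x gstar"
    using sl npos unfolding MIND_loss_def T_def by (simp add: divide_strict_right_mono)
  then show False using gstar_min g'in by fastforce
qed

end
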